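(* Let $\omega\in\mathbb{F}_8$ be a root of $y^3+y+1$, let $m\in\mathbb{N}$, let $\emptyset\neq L\subsetneq[m]$, let $D=\Delta_L+\omega\Delta_L+\omega^2\Delta_L\subseteq\mathbb{F}_8^m$ and $D^c=\mathbb{F}_8^m\setminus D$. Then $C_{D^c}$ is a $2$-weight linear code over $\mathbb{F}_8$ of length $2^{3m}-2^{3|L|}$, dimension $m$ and minimum distance $7\cdot2^{3(m-1)}-7\cdot2^{3(|L|-1)}$; its codewords have weights $0$, $7\cdot2^{3(m-1)}-7\cdot2^{3(|L|-1)}$ and $7\cdot2^{3(m-1)}$. Moreover, $C_{D^c}$ is a Griesmer code and hence distance optimal, and it is a minimal code if $3(m-|L|)-4\ge0$.
   Context: $[m]=\{1,\dots,m\}$; $\Delta_L=\{w\in\mathbb{F}_2^m:\{i:w_i\ne0\}\subseteq L\}$. $A+\omega B+\omega^2C=\{a+\omega b+\omega^2c: a\in A,b\in B,c\in C\}$. For an ordered finite set $P\subseteq\mathbb{F}_8^m$, $C_P=\{(v\cdot d)_{d\in P}: v\in\mathbb{F}_8^m\}$. An $l$-weight code has exactly $l$ distinct nonzero Hamming weights. An $[n,k,d]$ code over $\mathbb{F}_q$ is Griesmer if $\sum_{i=0}^{k-1}\lceil d/q^i\rceil=n$, and distance optimal if no $[n,k,d+1]$ linear code over $\mathbb{F}_q$ exists. A code is minimal if for every nonzero codeword $c$, each nonzero codeword $c'$ with $\mathrm{Supp}(c')\subseteq\mathrm{Supp}(c)$ is a scalar multiple of $c$. *)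

theory Defs
  imports Complex_Main "HOL-Library.Function_Algebras" "HOL-Library.Cardinality"
begin

text \<open>Vectors of F^m are functions 'n => 'a on a finite index type 'n with CARD('n) = m.
  A code with coordinate set I is a set of functions 'i => 'a vanishing outside I.\<close>

definition dotp :: "('n::finite \<Rightarrow> 'a::field) \<Rightarrow> ('n \<Rightarrow> 'a) \<Rightarrow> 'a" where
  "dotp v d = (\<Sum>i\<in>UNIV. v i * d i)"

definition DeltaL :: "'n set \<Rightarrow> ('n \<Rightarrow> 'a::field) set" where
  "DeltaL L = {w. (\<forall>i. w i \<in> {0, 1}) \<and> {i. w i \<noteq> 0} \<subseteq> L}"

definition Dset :: "'a::field \<Rightarrow> 'n set \<Rightarrow> ('n \<Rightarrow> 'a) set" where
  "Dset \<omega> L = {(\<lambda>i. a i + \<omega> * b i + \<omega>^2 * c i) | a b c.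
                  a \<in> DeltaL L \<and> b \<in> DeltaL L \<and> c \<in> DeltaL L}"

text \<open>C_P = {(v . d)_{d in P} : v in F^m}, coordinates indexed by P itself.\<close>
definition codeP :: "('n::finite \<Rightarrow> 'a::field) set \<Rightarrow> (('n \<Rightarrow> 'a) \<Rightarrow> 'a) set" where
  "codeP P = (\<lambda>v. \<lambda>d. if d \<in> P then dotp v d else 0) ` UNIV"

definition hw :: "('i \<Rightarrow> 'a::zero) \<Rightarrow> nat" where
  "hw c = card {i. c i \<noteq> 0}"

definition is_lin_code :: "'i set \<Rightarrow> ('i \<Rightarrow> 'a::field) set \<Rightarrow> bool" where
  "is_lin_code I C \<longleftrightarrow> finite I \<and> (\<forall>c\<in>C. \<forall>i. i \<notin> I \<longrightarrow> c i = 0) \<and> (\<lambda>i. 0) \<in> C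
     \<and> (\<forall>x\<in>C. \<forall>y\<in>C. (\<lambda>i. x i + y i) \<in> C) \<and> (\<forall>a. \<forall>x\<in>C. (\<lambda>i. a * x i) \<in> C)"

definition code_dim :: "('i \<Rightarrow> 'a::field) set \<Rightarrow> nat" where
  "code_dim C = vector_space.dim (\<lambda>(a::'a) (x::'i \<Rightarrow> 'a). \<lambda>i. a * x i) C"

definition nz_weights :: "('i \<Rightarrow> 'a::zero) set \<Rightarrow> nat set" where
  "nz_weights C = {hw c | c. c \<in> C \<and> c \<noteq> (\<lambda>i. 0)}"

definition min_dist :: "('i \<Rightarrow> 'a::zero) set \<Rightarrow> nat" where
  "min_dist C = Min (nz_weights C)"

definition is_l_weight :: "nat \<Rightarrow> ('i \<Rightarrow> 'a::zero) set \<Rightarrow> bool" where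
  "is_l_weight l C \<longleftrightarrow> card (nz_weights C) = l"

definition griesmer :: "nat \<Rightarrow> nat \<Rightarrow> nat \<Rightarrow> 'a::finite itself \<Rightarrow> bool" where
  "griesmer n k d TYPE('a) \<longleftrightarrow>
     (\<Sum>i<k. nat \<lceil>real d / real (CARD('a) ^ i)\<rceil>) = n"

definition dist_optimal :: "nat \<Rightarrow> nat \<Rightarrow> nat \<Rightarrow> 'a::field itself \<Rightarrow> bool" where
  "dist_optimal n k d TYPE('a) \<longleftrightarrow>
     \<not> (\<exists>C :: (nat \<Rightarrow> 'a) set. is_lin_code {..<n} C \<and> code_dim C = k \<and> min_dist C = d + 1)"

definition minimal_code :: "('i \<Rightarrow> 'a::field) set \<Rightarrow> bool" where
  "minimal_code C \<longleftrightarrow> (\<forall>c\<in>C. c \<noteq> (\<lambda>i. 0) \<longrightarrow> (\<forall>c'\<in>C. c' \<noteq> (\<lambda>i. 0) \<and> {i. c' i \<noteq> 0} \<subseteq> {i. c i \<noteq> 0}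
      \<longrightarrow> (\<exists>a. c' = (\<lambda>i. a * c i))))"

end

theory Submission
  imports Defs "HOL-Library.FuncSet"
begin


interpretation fv: vector_space "\<lambda>(a::'a::field) (x::'i \<Rightarrow> 'a). \<lambda>i. a * x i"
  by unfold_locales (auto simp: fun_eq_iff algebra_simps)

lemma card_times_zero:
  fixes x :: "'a::{field,finite}"
  shows "of_nat CARD('a) * x = 0"
proof -
  have "(\<Sum>y\<in>UNIV. x + y) = (\<Sum>y\<in>UNIV. y)"
    by (rule sum.reindex_bij_betw) (auto simp: bij_betw_def inj_on_def intro!: image_eqI[where x="y - x" for y])
  then show ?thesis by (simp add: sum.distrib)
qed

lemma char2:
  fixes x :: "'a::{field,finite}"
  assumes "CARD('a) = 8"
  shows "x + x = 0"
proof -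
  have "(8::'a) * 1 = 0" using card_times_zero[of "1::'a"] assms by simp
  then have "(2::'a)^3 = 0" by (simp add: eval_nat_numeral)
  then have "(2::'a) = 0" by (meson power_eq_0_iff)
  then show ?thesis by (metis mult_2 mult_zero_left)
qed

lemma omega_facts:
  fixes w :: "'a::{field,finite}"
  assumes q: "CARD('a) = 8" and r: "w^3 + w + 1 = 0"
  shows "w \<noteq> 0" "1 + w \<noteq> 0" "w^2 \<noteq> 0" "1 + w^2 \<noteq> 0" "w + w^2 \<noteq> 0" "1 + w + w^2 \<noteq> 0"
proof -
  have two: "x + x = 0" for x :: 'a using char2[OF q] .
  have neg: "- x = x" for x :: 'a using two[of x] by (simp add: add_eq_0_iff)
  have one: "(1::'a) \<noteq> 0" by simp
  show w0: "w \<noteq> 0" using r by auto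
  show w1: "1 + w \<noteq> 0"
  proof
    assume "1 + w = 0" then have "w = 1" using neg[of 1] by (simp add: add_eq_0_iff)
    then have "(1::'a) + 1 + 1 = 0" using r by (simp only: power_one)
    then show False by (simp only: two add_0_left one)
  qed
  show "w^2 \<noteq> 0" using w0 by simp
  show "1 + w^2 \<noteq> 0"
  proof
    assume "1 + w^2 = 0" then have "w^2 = 1" using neg[of 1] by (simp add: add_eq_0_iff)
    then have "w^3 = w" by (simp add: power3_eq_cube power2_eq_square)
    then show False using r two[of w] by simp
  qed
  show "w + w^2 \<noteq> 0"
  proof
    assume "w + w^2 = 0" then have "w * (1 + w) = 0" by (simp add: algebra_simps power2_eq_square)
    then show False using w0 w1 by simp
  qed
  show "1 + w + w^2 \<noteq> 0"
  proof
    assume "1 + w + w^2 = 0" then have h: "w^2 = 1 + w" using neg[of "1+w"] by (simp add: add_eq_0_iff add.commute)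
    have "w^3 = w * w^2" by (simp add: power3_eq_cube power2_eq_square)
    also have "\<dots> = w + w^2" using h by (simp add: algebra_simps power2_eq_square)
    also have "\<dots> = 1 + (w + w)" using h by (simp add: algebra_simps)
    finally have "w^3 = 1" using two[of w] by simp
    then show False using r w0 two[of 1] by (simp add: add.assoc add.left_commute)
  qed
qed

lemma bits_indep:
  fixes w :: "'a::{field,finite}"
  assumes q: "CARD('a) = 8" and r: "w^3 + w + 1 = 0"
    and c: "c0 \<in> {0,1}" "c1 \<in> {0,1}" "c2 \<in> {0,1}" and z: "c0 + c1*w + c2*w^2 = 0"
  shows "c0 = 0 \<and> c1 = 0 \<and> c2 = 0"
  using c z omega_facts[OF q r] by (auto simp: add.assoc)

lemma bits_surj:
  fixes w :: "'a::{field,finite}"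
  assumes q: "CARD('a) = 8" and r: "w^3 + w + 1 = 0"
  shows "\<exists>a0 a1 a2. a0 \<in> {0,1} \<and> a1 \<in> {0,1} \<and> a2 \<in> {0,1} \<and> y = a0 + a1*w + a2*w^2"
proof -
  have two: "x + x = 0" for x :: 'a using char2[OF q] .
  have neg: "- x = x" for x :: 'a using two[of x] by (simp add: add_eq_0_iff)
  define B :: "('a \<times> 'a \<times> 'a) set" where "B = {0,1} \<times> {0,1} \<times> {0,1}"
  define g where "g = (\<lambda>(a0::'a,a1::'a,a2::'a). a0 + a1*w + a2*w^2)"
  have sub: "x \<in> {0,1} \<Longrightarrow> y \<in> {0,1} \<Longrightarrow> x - y \<in> {(0::'a),1}" for x y
    using neg[of 1] by auto
  have "inj_on g B"
  proof (rule inj_onI)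
    fix a b assume a: "a \<in> B" and b: "b \<in> B" and e: "g a = g b"
    obtain a0 a1 a2 where ad: "a = (a0,a1,a2)" by (cases a) auto
    obtain b0 b1 b2 where bd: "b = (b0,b1,b2)" by (cases b) auto
    have "(a0 - b0) + (a1 - b1)*w + (a2 - b2)*w^2 = 0"
      using e unfolding ad bd g_def by (simp add: algebra_simps)
    moreover have "a0 - b0 \<in> {0,1}" "a1 - b1 \<in> {0,1}" "a2 - b2 \<in> {0,1}"
    proof -
      have "a0 \<in> {0,1}" "a1 \<in> {0,1}" "a2 \<in> {0,1}" "b0 \<in> {0,1}" "b1 \<in> {0,1}" "b2 \<in> {0,1}"
        using a b unfolding ad bd B_def by auto
      then show "a0 - b0 \<in> {0,1}" "a1 - b1 \<in> {0,1}" "a2 - b2 \<in> {0,1}" using sub by blast+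
    qed
    ultimately have "a0 - b0 = 0 \<and> a1 - b1 = 0 \<and> a2 - b2 = 0"
      by (intro bits_indep[OF q r])
    then show "a = b" unfolding ad bd by simp
  qed
  moreover have "card B = 8" unfolding B_def by (simp add: card_cartesian_product)
  ultimately have "card (g ` B) = CARD('a)" using q by (simp add: card_image)
  then have "g ` B = UNIV" by (simp add: card_subset_eq)
  then have "y \<in> g ` B" by simp
  then obtain a where a: "a \<in> B" "y = g a" by blast
  obtain a0 a1 a2 where ad: "a = (a0,a1,a2)" by (cases a) auto
  have "a0 \<in> {0,1}" "a1 \<in> {0,1}" "a2 \<in> {0,1}" using a(1) unfolding ad B_def by auto
  moreover have "y = a0 + a1*w + a2*w^2" using a(2) unfolding ad g_def by simp
  ultimately show ?thesis by blast
qed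

definition supL :: "'n set \<Rightarrow> ('n \<Rightarrow> 'a::zero) set" where
  "supL L = {x. \<forall>i. i \<notin> L \<longrightarrow> x i = 0}"

lemma Dset_eq:
  fixes w :: "'a::{field,finite}"
  fixes L :: "'n set"
  assumes q: "CARD('a) = 8" and r: "w^3 + w + 1 = 0"
  shows "Dset w L = supL L"
proof
  show "Dset w L \<subseteq> supL L"
  proof
    fix x assume "x \<in> Dset w L"
    then obtain a b c where x: "x = (\<lambda>i. a i + w * b i + w^2 * c i)" and
      "a \<in> DeltaL L" "b \<in> DeltaL L" "c \<in> DeltaL L" unfolding Dset_def by blast
    then have "\<forall>i. i \<notin> L \<longrightarrow> a i = 0 \<and> b i = 0 \<and> c i = 0" unfolding DeltaL_def by blast
    then show "x \<in> supL L" unfolding x supL_def by simp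
  qed
next
  show "supL L \<subseteq> Dset w L"
  proof
    fix x :: "'n \<Rightarrow> 'a" assume x: "x \<in> supL L"
    have "\<forall>y. \<exists>a0 a1 a2. a0 \<in> {0,1} \<and> a1 \<in> {0,1} \<and> a2 \<in> {0,1} \<and> y = a0 + a1*w + a2*w^2"
      using bits_surj[OF q r] by blast
    then obtain f0 f1 f2 where f: "\<And>y. f0 y \<in> {0,1} \<and> f1 y \<in> {0,1} \<and> f2 y \<in> {0::'a,1} \<and> y = f0 y + f1 y*w + f2 y*w^2"
      by metis
    define a where "a = (\<lambda>i. if i \<in> L then f0 (x i) else 0)"
    define b where "b = (\<lambda>i. if i \<in> L then f1 (x i) else 0)"
    define c where "c = (\<lambda>i. if i \<in> L then f2 (x i) else 0)"
    have "a \<in> DeltaL L" "b \<in> DeltaL L" "c \<in> DeltaL L"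
      unfolding a_def b_def c_def DeltaL_def using f by auto
    moreover have "x = (\<lambda>i. a i + w * b i + w^2 * c i)"
    proof
      fix i show "x i = a i + w * b i + w^2 * c i"
        using x f[of "x i"] unfolding a_def b_def c_def supL_def by (auto simp: mult.commute)
    qed
    ultimately show "x \<in> Dset w L" unfolding Dset_def by blast
  qed
qed

lemma card_supL:
  fixes L :: "'n::finite set"
  shows "card (supL L :: ('n \<Rightarrow> 'a::{zero,finite}) set) = CARD('a) ^ card L"
proof -
  have "bij_betw (\<lambda>x. restrict x L) (supL L :: ('n \<Rightarrow> 'a) set) (PiE L (\<lambda>_. UNIV))"
  proof (rule bij_betw_imageI)
    show "inj_on (\<lambda>x. restrict x L) (supL L :: ('n \<Rightarrow> 'a) set)"
      by (auto simp: inj_on_def supL_def fun_eq_iff restrict_def) metis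
    show "(\<lambda>x. restrict x L) ` (supL L :: ('n \<Rightarrow> 'a) set) = PiE L (\<lambda>_. UNIV)"
    proof
      show "(\<lambda>x. restrict x L) ` (supL L :: ('n \<Rightarrow> 'a) set) \<subseteq> PiE L (\<lambda>_. UNIV)" by auto
      show "PiE L (\<lambda>_. UNIV) \<subseteq> (\<lambda>x. restrict x L) ` (supL L :: ('n \<Rightarrow> 'a) set)"
      proof
      fix y assume y: "y \<in> PiE L (\<lambda>_. (UNIV::'a set))"
      show "y \<in> (\<lambda>x. restrict x L) ` (supL L :: ('n \<Rightarrow> 'a) set)"
        unfolding supL_def using y by (intro image_eqI[where x="\<lambda>i. if i \<in> L then y i else 0"])
          (auto simp: fun_eq_iff restrict_def PiE_def extensional_def)
      qed
    qed
  qed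
  then have "card (supL L :: ('n \<Rightarrow> 'a) set) = card (PiE L (\<lambda>_. UNIV :: 'a set))"
    by (rule bij_betw_same_card)
  then show ?thesis by (simp add: card_PiE)
qed



lemma fiber_card:
  fixes V :: "('i \<Rightarrow> 'a::{field,finite}) set" and \<phi> :: "('i \<Rightarrow> 'a) \<Rightarrow> 'a"
  assumes fin: "finite V"
    and add: "\<And>x y. x\<in>V \<Longrightarrow> y\<in>V \<Longrightarrow> (\<lambda>i. x i + y i) \<in> V"
    and smul: "\<And>a x. x\<in>V \<Longrightarrow> (\<lambda>i. a * x i) \<in> V"
    and padd: "\<And>x y. x\<in>V \<Longrightarrow> y\<in>V \<Longrightarrow> \<phi> (\<lambda>i. x i + y i) = \<phi> x + \<phi> y"
    and psmul: "\<And>a x. x\<in>V \<Longrightarrow> \<phi> (\<lambda>i. a * x i) = a * \<phi> x"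
    and x0: "x0 \<in> V" "\<phi> x0 \<noteq> 0"
  shows "card V = CARD('a) * card {x\<in>V. \<phi> x = 0}"
proof -
  let ?F = "\<lambda>a. {x\<in>V. \<phi> x = a}"
  have eq: "card (?F a) = card (?F 0)" for a
  proof -
    define t where "t = (\<lambda>x. \<lambda>i. x i + (a / \<phi> x0) * x0 i)"
    define s where "s = (\<lambda>x. \<lambda>i. x i + (- a / \<phi> x0) * x0 i)"
    have "bij_betw t (?F 0) (?F a)"
    proof (rule bij_betw_byWitness[where f'=s])
      show "\<forall>x\<in>?F 0. s (t x) = x" by (auto simp: s_def t_def algebra_simps)
      show "\<forall>y\<in>?F a. t (s y) = y" by (auto simp: s_def t_def algebra_simps)
      show "t ` ?F 0 \<subseteq> ?F a"
      proof
        fix y assume "y \<in> t ` ?F 0"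
        then obtain x where x: "x \<in> V" "\<phi> x = 0" and y: "y = t x" by blast
        have sx: "(\<lambda>i. (a / \<phi> x0) * x0 i) \<in> V" using smul x0 by blast
        have tv: "t x \<in> V" unfolding t_def using add[OF x(1) sx] .
        have e1: "\<phi> (\<lambda>i. (a / \<phi> x0) * x0 i) = a" using psmul[OF x0(1), of "a / \<phi> x0"] x0(2) by simp
        moreover have "\<phi> (t x) = a" unfolding t_def using padd[OF x(1) sx] e1 x(2) by simp
        ultimately show "y \<in> ?F a" using y tv by simp
      qed
      show "s ` ?F a \<subseteq> ?F 0"
      proof
        fix y assume "y \<in> s ` ?F a"
        then obtain x where x: "x \<in> V" "\<phi> x = a" and y: "y = s x" by blast
        have sx: "(\<lambda>i. (- a / \<phi> x0) * x0 i) \<in> V" using smul x0 by blast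
        have tv: "s x \<in> V" unfolding s_def using add[OF x(1) sx] .
        have e1: "\<phi> (\<lambda>i. (- a / \<phi> x0) * x0 i) = - a" using psmul[OF x0(1), of "- a / \<phi> x0"] x0(2) by simp
        moreover have "\<phi> (s x) = 0" unfolding s_def using padd[OF x(1) sx] e1 x(2) by simp
        ultimately show "y \<in> ?F 0" using y tv by simp
      qed
    qed
    then show ?thesis by (simp add: bij_betw_same_card)
  qed
  have hV: "V = (\<Union>a\<in>UNIV. ?F a)" by auto
  have "card (\<Union>a\<in>UNIV. ?F a) = (\<Sum>a\<in>UNIV. card (?F a))"
    by (rule card_UN_disjoint) (use fin in auto)
  then have "card V = (\<Sum>a\<in>UNIV. card (?F a))" using arg_cong[OF hV, of card] by simp
  also have "\<dots> = (\<Sum>a\<in>(UNIV::'a set). card (?F 0))"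
  proof -
    have fe: "(\<lambda>a. card (?F a)) = (\<lambda>a. card (?F 0))"
    proof
      fix a show "card (?F a) = card (?F 0)" by (rule eq)
    qed
    show ?thesis by (subst fe) (rule refl)
  qed
  also have "\<dots> = CARD('a) * card (?F 0)" by simp
  finally show ?thesis .
qed

lemma fiber_card_nz:
  fixes V :: "('i \<Rightarrow> 'a::{field,finite}) set" and \<phi> :: "('i \<Rightarrow> 'a) \<Rightarrow> 'a"
  assumes fin: "finite V"
    and add: "\<And>x y. x\<in>V \<Longrightarrow> y\<in>V \<Longrightarrow> (\<lambda>i. x i + y i) \<in> V"
    and smul: "\<And>a x. x\<in>V \<Longrightarrow> (\<lambda>i. a * x i) \<in> V"
    and padd: "\<And>x y. x\<in>V \<Longrightarrow> y\<in>V \<Longrightarrow> \<phi> (\<lambda>i. x i + y i) = \<phi> x + \<phi> y"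
    and psmul: "\<And>a x. x\<in>V \<Longrightarrow> \<phi> (\<lambda>i. a * x i) = a * \<phi> x"
  shows "CARD('a) * card {x\<in>V. \<phi> x \<noteq> 0} \<le> (CARD('a) - 1) * card V"
proof (cases "\<exists>x0\<in>V. \<phi> x0 \<noteq> 0")
  case True
  then obtain x0 where x0: "x0 \<in> V" "\<phi> x0 \<noteq> 0" by blast
  have c: "card V = CARD('a) * card {x\<in>V. \<phi> x = 0}"
    using fiber_card[of V \<phi> x0] fin add smul padd psmul x0 by blast
  have "{x\<in>V. \<phi> x \<noteq> 0} = V - {x\<in>V. \<phi> x = 0}" by auto
  then have "card {x\<in>V. \<phi> x \<noteq> 0} = card V - card {x\<in>V. \<phi> x = 0}"
    using fin by (simp add: card_Diff_subset)
  then show ?thesis using c by (simp add: algebra_simps diff_mult_distrib2)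
next
  case False
  then have e: "{x\<in>V. \<phi> x \<noteq> 0} = {}" by auto
  show ?thesis unfolding e by simp
qed

lemma dotp_add: "dotp v (\<lambda>i. x i + y i) = dotp v x + dotp v y"
  by (simp add: dotp_def algebra_simps sum.distrib)
lemma dotp_smul: "dotp v (\<lambda>i. a * x i) = a * dotp v x"
  by (simp add: dotp_def algebra_simps sum_distrib_left)
lemma dotp_add1: "dotp (\<lambda>i. x i + y i) d = dotp x d + dotp y d"
  by (simp add: dotp_def algebra_simps sum.distrib)
lemma dotp_smul1: "dotp (\<lambda>i. a * x i) d = a * dotp x d"
  by (simp add: dotp_def algebra_simps sum_distrib_left)

definition ev :: "'n \<Rightarrow> 'n \<Rightarrow> 'a::{zero,one}" where
  "ev j = (\<lambda>i. if i = j then 1 else 0)"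

lemma dotp_ev: "dotp v (ev j) = (v j :: 'a::field)"
proof -
  have "(\<lambda>i. v i * ev j i) = (\<lambda>i. if i = j then v i else 0)" by (auto simp: ev_def)
  then show ?thesis unfolding dotp_def by (simp only:) simp
qed

lemma count_dotp_supL:
  fixes v :: "'n::finite \<Rightarrow> 'a::{field,finite}"
  assumes "i0 \<in> S" "v i0 \<noteq> 0"
  shows "card {d \<in> supL S. dotp v d \<noteq> 0} = (CARD('a) - 1) * CARD('a)^(card S - 1)"
proof -
  let ?V = "supL S :: ('n \<Rightarrow> 'a) set"
  have x0: "ev i0 \<in> ?V" "dotp v (ev i0) \<noteq> 0" using assms by (auto simp: supL_def ev_def dotp_ev[unfolded ev_def])
  have c: "card ?V = CARD('a) * card {x\<in>?V. dotp v x = 0}"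
    by (rule fiber_card[of ?V "dotp v" "ev i0", OF _ _ _ _ _ x0]) (auto simp: supL_def dotp_add dotp_smul)
  have "{x\<in>?V. dotp v x \<noteq> 0} = ?V - {x\<in>?V. dotp v x = 0}" by auto
  then have d: "card {x\<in>?V. dotp v x \<noteq> 0} = card ?V - card {x\<in>?V. dotp v x = 0}"
    by (simp add: card_Diff_subset)
  have s: "card S \<ge> 1" using assms(1) by (auto simp: Suc_le_eq card_gt_0_iff)
  then have p: "CARD('a) ^ card S = CARD('a) * CARD('a) ^ (card S - 1)"
    by (metis Suc_diff_le diff_Suc_1 power_Suc)
  have "card {x\<in>?V. dotp v x = 0} = CARD('a) ^ (card S - 1)"
    using c card_supL[where L=S and 'a='a] p by simp
  then show ?thesis using d card_supL[where L=S and 'a='a] p by (simp add: diff_mult_distrib)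
qed

lemma dotp_zero_supL:
  assumes "\<forall>i\<in>S. v i = 0" "d \<in> supL S"
  shows "dotp v d = (0::'a::field)"
  using assms unfolding dotp_def supL_def by (auto intro!: sum.neutral)

lemma supL_UNIV: "supL UNIV = UNIV" by (simp add: supL_def)



lemma sum_fun_apply: "(\<Sum>j\<in>A. f j) x = (\<Sum>j\<in>A. f j x)"
  by (induction A rule: infinite_finite_induct) auto

lemma p8: "(2::nat)^(3*k) = 8^k" by (simp add: power_mult)

lemma hw_if: "hw (\<lambda>d. if d \<in> P then f d else 0) = card {d\<in>P. f d \<noteq> 0}"
  unfolding hw_def by (rule arg_cong[where f=card]) auto

lemma dotp_ev_left: "dotp (ev j) d = (d j :: 'a::field)"
proof -
  have "(\<lambda>i. ev j i * d i) = (\<lambda>i. if i = j then d i else 0)" by (auto simp: ev_def)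
  then show ?thesis unfolding dotp_def by (simp only:) simp
qed

lemma dotp_zero1: "dotp (\<lambda>i. 0) d = (0::'a::field)" by (simp add: dotp_def)

lemma finite_supL:
  assumes "finite I"
  shows "finite (supL I :: ('i \<Rightarrow> 'a::{zero,finite}) set)"
proof -
  have "inj_on (\<lambda>x. restrict x I) (supL I :: ('i \<Rightarrow> 'a) set)"
    by (auto simp: inj_on_def supL_def fun_eq_iff restrict_def) metis
  moreover have "(\<lambda>x. restrict x I) ` (supL I :: ('i \<Rightarrow> 'a) set) \<subseteq> PiE I (\<lambda>_. UNIV)" by auto
  moreover have "finite (PiE I (\<lambda>_. UNIV :: 'a set))" using assms by (simp add: finite_PiE)
  ultimately show ?thesis by (meson finite_imageD finite_subset)
qed

definition cw :: "'n set \<Rightarrow> ('n::finite \<Rightarrow> 'a::field) \<Rightarrow> ('n \<Rightarrow> 'a) \<Rightarrow> 'a" where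
  "cw L v = (\<lambda>d. if d \<in> UNIV - supL L then dotp v d else 0)"

lemma codeP_cw: "codeP (UNIV - supL L) = range (cw L)"
  unfolding codeP_def cw_def by simp

lemma cw_add: "cw L (\<lambda>i. u i + v i) = (\<lambda>d. cw L u d + cw L v d)"
  by (auto simp: cw_def dotp_add1)
lemma cw_smul: "cw L (\<lambda>i. a * v i) = (\<lambda>d. a * cw L v d)"
  by (auto simp: cw_def dotp_smul1)
lemma cw_zero: "cw L (\<lambda>i. 0) = (\<lambda>d. 0)"
  by (auto simp: cw_def dotp_zero1)

lemma cw_inj0:
  fixes w :: "'n::finite \<Rightarrow> 'a::field"
  assumes i0: "i0 \<notin> L" and z: "cw L w = (\<lambda>d. 0)"
  shows "w = (\<lambda>i. 0)"
proof
  fix j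
  have ev_notin: "ev k \<notin> (supL L :: ('n \<Rightarrow> 'a) set)" if "k \<notin> L" for k
    using that by (auto simp: supL_def ev_def)
  show "w j = 0"
  proof (cases "j \<in> L")
    case False
    have "cw L w (ev j) = w j" using ev_notin[OF False] by (simp add: cw_def dotp_ev)
    then show ?thesis using z by simp
  next
    case True
    then have ne: "j \<noteq> i0" using i0 by auto
    define x :: "'n \<Rightarrow> 'a" where "x = (\<lambda>i. ev j i + ev i0 i)"
    have "x i0 = 1" using ne by (simp add: x_def ev_def)
    then have "x \<notin> supL L" using i0 by (auto simp: supL_def)
    then have "cw L w x = w j + w i0" by (simp add: cw_def x_def dotp_add dotp_ev)
    moreover have "cw L w (ev i0) = w i0" using ev_notin[OF i0] by (simp add: cw_def dotp_ev)
    ultimately show ?thesis using z by simp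
  qed
qed

lemma cw_inj:
  fixes u v :: "'n::finite \<Rightarrow> 'a::field"
  assumes i0: "i0 \<notin> L" and e: "cw L u = cw L v"
  shows "u = v"
proof -
  have "cw L (\<lambda>i. u i + (-1) * v i) = (\<lambda>d. 0)"
    unfolding cw_add cw_smul using e by simp
  then have "(\<lambda>i. u i + (-1) * v i) = (\<lambda>i. 0)" by (rule cw_inj0[OF i0])
  then show ?thesis by (auto simp: fun_eq_iff dest: fun_cong)
qed

lemma cw_sum: "cw L v = (\<Sum>j\<in>UNIV. (\<lambda>d. v j * cw L (ev j) d))"
proof
  fix d
  have "(\<Sum>j\<in>UNIV. (\<lambda>d. v j * cw L (ev j) d)) d = (\<Sum>j\<in>UNIV. v j * cw L (ev j) d)"
    by (rule sum_fun_apply)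
  also have "\<dots> = cw L v d"
  proof (cases "d \<in> supL L")
    case True then show ?thesis by (simp add: cw_def)
  next
    case False
    then have "(\<Sum>j\<in>UNIV. v j * cw L (ev j) d) = (\<Sum>j\<in>UNIV. v j * d j)"
      by (simp add: cw_def dotp_ev_left)
    then show ?thesis using False by (simp add: cw_def dotp_def)
  qed
  finally show "cw L v d = (\<Sum>j\<in>UNIV. (\<lambda>d. v j * cw L (ev j) d)) d" by simp
qed

lemma hw_cw:
  fixes v :: "'n::finite \<Rightarrow> 'a::{field,finite}"
  shows "hw (cw L v) = card {d. dotp v d \<noteq> 0} - card {d \<in> supL L. dotp v d \<noteq> 0}"
proof -
  have "hw (cw L v) = card {d \<in> UNIV - supL L. dotp v d \<noteq> 0}"
    unfolding cw_def by (rule hw_if)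
  also have "{d \<in> UNIV - supL L. dotp v d \<noteq> 0} = {d. dotp v d \<noteq> 0} - {d \<in> supL L. dotp v d \<noteq> 0}"
    by auto
  also have "card \<dots> = card {d. dotp v d \<noteq> 0} - card {d \<in> supL L. dotp v d \<noteq> 0}"
    by (rule card_Diff_subset) auto
  finally show ?thesis .
qed

lemma hw_cw_cases:
  fixes v :: "'n::finite \<Rightarrow> 'a::{field,finite}" and L :: "'n set"
  assumes q: "CARD('a) = 8"
  shows "hw (cw L v) = (if v = (\<lambda>i. 0) then 0 else if \<exists>i\<in>L. v i \<noteq> 0
     then 7 * 8^(CARD('n) - 1) - 7 * 8^(card L - 1) else 7 * 8^(CARD('n) - 1))"
proof (cases "v = (\<lambda>i. 0)")
  case True
  then show ?thesis by (simp add: cw_zero hw_def)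
next
  case False
  then obtain i0 where i0: "v i0 \<noteq> 0" by auto
  have a: "card {d. dotp v d \<noteq> 0} = 7 * 8^(CARD('n) - 1)"
    using count_dotp_supL[of i0 UNIV v] i0 q by (simp add: supL_UNIV)
  show ?thesis
  proof (cases "\<exists>i\<in>L. v i \<noteq> 0")
    case True
    then obtain i1 where "i1 \<in> L" "v i1 \<noteq> 0" by auto
    then have "card {d \<in> supL L. dotp v d \<noteq> 0} = 7 * 8^(card L - 1)"
      using count_dotp_supL[of i1 L v] q by simp
    then show ?thesis using False True a hw_cw[of L v] by simp
  next
    case F2: False
    have e: "{d \<in> supL L. dotp v d \<noteq> 0} = {}" using F2 dotp_zero_supL[of L v] by auto
    show ?thesis using False F2 a hw_cw[of L v] by (simp add: e)
  qed
qed



lemma ev_inj: "inj (ev :: 'n \<Rightarrow> 'n \<Rightarrow> 'a::zero_neq_one)"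
proof (rule injI)
  fix j k :: 'n assume "(ev j :: 'n \<Rightarrow> 'a) = ev k"
  then have "(ev j :: 'n \<Rightarrow> 'a) j = ev k j" by simp
  then show "j = k" by (auto simp: ev_def split: if_splits)
qed

lemma code_dim_cw:
  fixes L :: "'n::finite set"
  assumes i0: "i0 \<notin> L"
  shows "code_dim (range (cw L :: ('n \<Rightarrow> 'a::{field,finite}) \<Rightarrow> _)) = CARD('n)"
proof -
  let ?B = "(\<lambda>j. cw L (ev j :: 'n \<Rightarrow> 'a)) ` UNIV"
  have inj: "inj (\<lambda>j. cw L (ev j :: 'n \<Rightarrow> 'a))"
  proof (rule injI)
    fix j k :: 'n assume "cw L (ev j :: 'n \<Rightarrow> 'a) = cw L (ev k)"
    then have "(ev j :: 'n \<Rightarrow> 'a) = ev k" by (rule cw_inj[OF i0])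
    with ev_inj[where 'a='a] show "j = k" by (rule injD)
  qed
  have span: "cw L v \<in> fv.span ?B" for v :: "'n \<Rightarrow> 'a"
  proof -
    have sc: "(\<lambda>d. v j * cw L (ev j) d) \<in> fv.span ?B" for j
      using fv.span_scale[OF fv.span_base[of "cw L (ev j)" ?B], of "v j"] by simp
    have "(\<Sum>j\<in>UNIV. (\<lambda>d. v j * cw L (ev j) d)) \<in> fv.span ?B"
      by (rule fv.span_sum) (rule sc)
    then show ?thesis using cw_sum[of L v] by simp
  qed
  have indep: "fv.independent ?B"
  proof
    assume "fv.dependent ?B"
    then obtain u where u: "\<exists>v\<in>?B. u v \<noteq> 0" "(\<Sum>v\<in>?B. (\<lambda>i. u v * v i)) = 0"
      using fv.dependent_finite[of ?B] by auto
    define w where "w = (\<lambda>j. u (cw L (ev j :: 'n \<Rightarrow> 'a)))"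
    have "(\<Sum>v\<in>?B. (\<lambda>i. u v * v i)) = (\<Sum>j\<in>UNIV. (\<lambda>d. w j * cw L (ev j) d))"
      unfolding w_def by (subst sum.reindex[OF inj]) simp
    also have "\<dots> = cw L w" by (rule cw_sum[symmetric])
    finally have "cw L w = (\<lambda>d. 0)" using u(2) by (simp add: zero_fun_def)
    then have "w = (\<lambda>i. 0)" by (rule cw_inj0[OF i0])
    then show False using u(1) unfolding w_def by (auto dest: fun_cong)
  qed
  show ?thesis unfolding code_dim_def
  proof (rule fv.dim_unique[of ?B])
    show "?B \<subseteq> range (cw L)" by auto
    show "range (cw L) \<subseteq> fv.span ?B" using span by auto
    show "fv.independent ?B" by (rule indep)
    show "card ?B = CARD('n)" using inj by (simp add: card_image)
  qed
qed

lemma card_sub_ge: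
  fixes C :: "('i \<Rightarrow> 'a::{field,finite}) set"
  assumes fin: "finite C" and sub: "fv.subspace C" and dim: "fv.dim C = k"
  shows "CARD('a) ^ k \<le> card C"
proof -
  obtain B where B: "B \<subseteq> C" "fv.independent B" "C \<subseteq> fv.span B" "card B = fv.dim C"
    by (rule fv.basis_exists)
  have finB: "finite B" using B(1) fin by (rule finite_subset)
  define f where "f u = (\<Sum>b\<in>B. (\<lambda>i. u b * b i))" for u :: "('i \<Rightarrow> 'a) \<Rightarrow> 'a"
  have spanC: "fv.span B \<subseteq> C" using fv.span_minimal[OF B(1) sub] .
  have img: "f ` PiE B (\<lambda>_. UNIV) \<subseteq> C"
  proof
    fix y assume "y \<in> f ` PiE B (\<lambda>_. UNIV)"
    then obtain u where y: "y = f u" by blast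
    have sc: "(\<lambda>i. u b * b i) \<in> fv.span B" if "b \<in> B" for b
      using fv.span_scale[OF fv.span_base[OF that], of "u b"] by simp
    have "f u \<in> fv.span B" unfolding f_def
      by (rule fv.span_sum) (rule sc)
    then show "y \<in> C" using spanC y by blast
  qed
  have inj: "inj_on f (PiE B (\<lambda>_. UNIV))"
  proof (rule inj_onI)
    fix u u' assume u: "u \<in> PiE B (\<lambda>_. UNIV)" and u': "u' \<in> PiE B (\<lambda>_. UNIV)" and e: "f u = f u'"
    define g where "g b = u b - u' b" for b
    have "(\<Sum>b\<in>B. (\<lambda>i. g b * b i)) = f u - f u'"
    proof (rule ext)
      fix i show "(\<Sum>b\<in>B. (\<lambda>i. g b * b i)) i = (f u - f u') i"
        by (simp add: f_def g_def sum_fun_apply sum_subtractf algebra_simps)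
    qed
    then have z: "(\<Sum>b\<in>B. (\<lambda>i. g b * b i)) = 0" using e by simp
    have "\<forall>b\<in>B. g b = 0"
    proof (rule ccontr)
      assume "\<not> (\<forall>b\<in>B. g b = 0)"
      then have "fv.dependent B" using fv.dependent_finite[OF finB] z by blast
      then show False using B(2) by simp
    qed
    then show "u = u'" using u u' unfolding g_def
      by (auto simp: fun_eq_iff PiE_def extensional_def)
  qed
  have "card (PiE B (\<lambda>_. UNIV :: 'a set)) = CARD('a) ^ k"
    using B(4) dim by (simp add: card_PiE finB)
  moreover have "card (PiE B (\<lambda>_. UNIV :: 'a set)) \<le> card C"
    using card_inj_on_le[OF inj img fin] .
  ultimately show ?thesis by simp
qed



lemma plotkin:
  fixes C :: "(nat \<Rightarrow> 'a::{field,finite}) set"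
  assumes q: "CARD('a) = 8" and lc: "is_lin_code {..<n} C" and dim: "code_dim C = k"
    and md: "min_dist C = dd + 1" and h: "7 * n = 8 * dd" and big: "dd + 1 < 8^k"
  shows False
proof -
  have sup: "\<forall>c\<in>C. \<forall>i. i \<notin> {..<n} \<longrightarrow> c i = 0" and z: "(\<lambda>i. 0) \<in> C"
    and add: "\<And>x y. x\<in>C \<Longrightarrow> y\<in>C \<Longrightarrow> (\<lambda>i. x i + y i) \<in> C"
    and smul: "\<And>a x. x\<in>C \<Longrightarrow> (\<lambda>i. a * x i) \<in> C"
    using lc unfolding is_lin_code_def by auto
  have "C \<subseteq> supL {..<n}" using sup unfolding supL_def by auto
  then have fin: "finite C" using finite_supL[of "{..<n}"] finite_subset by blast
  have sub: "fv.subspace C" unfolding fv.subspace_def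
    using z add smul by (auto simp: zero_fun_def plus_fun_def)
  have Nge: "8^k \<le> card C" using card_sub_ge[OF fin sub] dim q unfolding code_dim_def by simp
  define N where "N = card C"
  have finnz: "finite (nz_weights C)"
  proof -
    have "nz_weights C \<subseteq> hw ` C" unfolding nz_weights_def by auto
    then show ?thesis using fin finite_subset by blast
  qed
  have wt: "dd + 1 \<le> hw c" if "c \<in> C" "c \<noteq> (\<lambda>i. 0)" for c
  proof -
    have "hw c \<in> nz_weights C" unfolding nz_weights_def using that by blast
    then have "Min (nz_weights C) \<le> hw c" using finnz by simp
    then show ?thesis using md unfolding min_dist_def by simp
  qed
  define S where "S = (\<Sum>c\<in>C. hw c)"
  have hw0: "hw (\<lambda>i::nat. 0::'a) = 0" by (simp add: hw_def)
  have low: "(N - 1) * (dd + 1) \<le> S"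
  proof -
    have "S = hw (\<lambda>i::nat. 0::'a) + (\<Sum>c\<in>C - {\<lambda>i. 0}. hw c)"
      unfolding S_def by (rule sum.remove[OF fin z])
    also have "\<dots> = (\<Sum>c\<in>C - {\<lambda>i. 0}. hw c)" using hw0 by simp
    finally have "S = (\<Sum>c\<in>C - {\<lambda>i. 0}. hw c)" .
    moreover have "(\<Sum>c\<in>C - {\<lambda>i. 0}. dd + 1) \<le> (\<Sum>c\<in>C - {\<lambda>i. 0}. hw c)"
      by (rule sum_mono) (use wt in auto)
    moreover have "card (C - {\<lambda>i. 0}) = N - 1" unfolding N_def using fin z by simp
    ultimately show ?thesis by simp
  qed
  have hwsum: "hw c = (\<Sum>i<n. if c i \<noteq> 0 then 1 else 0)" if "c \<in> C" for c
  proof -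
    have "{i. c i \<noteq> 0} = {i\<in>{..<n}. c i \<noteq> 0}" using sup that by auto
    then have "hw c = card {i\<in>{..<n}. c i \<noteq> 0}" unfolding hw_def by simp
    also have "\<dots> = (\<Sum>i\<in>{i\<in>{..<n}. c i \<noteq> 0}. 1)" by simp
    also have "\<dots> = (\<Sum>i<n. if c i \<noteq> 0 then 1 else 0)" by (rule sum.inter_filter) simp
    finally show ?thesis .
  qed
  have "S = (\<Sum>c\<in>C. \<Sum>i<n. if c i \<noteq> 0 then 1 else 0)"
    unfolding S_def using hwsum by (intro sum.cong) auto
  also have "\<dots> = (\<Sum>i<n. \<Sum>c\<in>C. if c i \<noteq> 0 then 1 else 0)" by (rule sum.swap)
  also have "\<dots> = (\<Sum>i<n. card {c\<in>C. c i \<noteq> 0})"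
    using fin by (intro sum.cong refl) (simp add: sum.inter_filter[symmetric])
  finally have Seq: "S = (\<Sum>i<n. card {c\<in>C. c i \<noteq> 0})" .
  have col: "8 * card {c\<in>C. c i \<noteq> 0} \<le> 7 * N" for i
  proof -
    have "CARD('a) * card {c\<in>C. c i \<noteq> 0} \<le> (CARD('a) - 1) * card C"
      by (rule fiber_card_nz[OF fin add smul]) auto
    then show ?thesis using q unfolding N_def by simp
  qed
  have "8 * S = (\<Sum>i<n. 8 * card {c\<in>C. c i \<noteq> 0})" unfolding Seq by (simp add: sum_distrib_left)
  also have "\<dots> \<le> (\<Sum>i<n. 7 * N)" by (rule sum_mono) (rule col)
  also have "\<dots> = 7 * n * N" by simp
  finally have up: "8 * S \<le> 8 * dd * N" using h by simp
  have "8 * ((N - 1) * (dd + 1)) \<le> 8 * (dd * N)" using low up by simp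
  then have "(N - 1) * (dd + 1) \<le> dd * N" by simp
  moreover have "N \<ge> 1"
  proof -
    have "1 \<le> (8::nat)^k" by simp
    then show ?thesis using Nge unfolding N_def by linarith
  qed
  ultimately have "N \<le> dd + 1"
  proof -
    assume a: "(N - 1) * (dd + 1) \<le> dd * N" and b: "N \<ge> 1"
    obtain M where M: "N = M + 1" using b by (metis add.commute le_Suc_ex)
    then have "M * (dd + 1) \<le> dd * (M + 1)" using a by simp
    then have "M \<le> dd" by (simp add: algebra_simps)
    then show ?thesis using M by simp
  qed
  then show False using Nge big unfolding N_def by simp
qed



lemma geo7a: "(\<Sum>i<k. 7 * 8^i) + 1 = (8::nat)^k"
  by (induction k) simp_all

lemma geo7: "(\<Sum>i<k. 7 * 8^(k - 1 - i)) = (8::nat)^k - 1"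
proof -
  have "(\<Sum>i<k. 7 * 8^(k - 1 - i)) = (\<Sum>i<k. (\<lambda>j. 7 * (8::nat)^j) (k - Suc i))" by simp
  also have "\<dots> = (\<Sum>i<k. 7 * 8^i)" by (rule sum.nat_diff_reindex)
  finally show ?thesis using geo7a[of k] by linarith
qed

lemma griesmer_term:
  fixes m l i :: nat
  assumes l1: "1 \<le> l" and lm: "l < m" and im: "i < m"
  shows "nat \<lceil>real (7*8^(m-1) - 7*8^(l-1)) / real ((8::nat)^i)\<rceil>
       = 7*8^(m-1-i) - (if i < l then 7*8^(l-1-i) else 0)"
proof -
  have pm: "(8::nat)^(m-1) = 8^i * 8^(m-1-i)" using im by (simp add: power_add[symmetric])
  have le: "7*8^(l-1) \<le> 7*(8::nat)^(m-1)" using lm by simp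
  show ?thesis
  proof (cases "i < l")
    case True
    have pl: "(8::nat)^(l-1) = 8^i * 8^(l-1-i)" using True by (simp add: power_add[symmetric])
    have "7*8^(m-1) - 7*8^(l-1) = (8::nat)^i * (7*8^(m-1-i) - 7*8^(l-1-i))"
      unfolding pm pl by (simp add: algebra_simps diff_mult_distrib2)
    then have "real (7*8^(m-1) - 7*8^(l-1)) / real ((8::nat)^i) = real (7*8^(m-1-i) - 7*8^(l-1-i))"
      by simp
    then show ?thesis using True by simp
  next
    case False
    define X where "X = real (7*8^(l-1)) / real ((8::nat)^i)"
    have "real (7*8^(m-1) - 7*8^(l-1)) = real (7*8^(m-1)) - real (7*8^(l-1))"
      using le by (simp add: of_nat_diff)
    then have e: "real (7*8^(m-1) - 7*8^(l-1)) / real ((8::nat)^i) = real (7*8^(m-1-i)) - X"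
      unfolding X_def pm by (simp add: diff_divide_distrib)
    have X0: "0 \<le> X" unfolding X_def by simp
    have "(8::nat)^l \<le> 8^i" using False by (simp add: power_increasing)
    moreover have "(8::nat)^l = 8 * 8^(l-1)" using l1 by (metis Suc_diff_le diff_Suc_1 power_Suc)
    moreover have "(0::nat) < 8^(l-1)" by simp
    ultimately have "7*8^(l-1) < (8::nat)^i" by linarith
    then have "real (7*8^(l-1)) < real ((8::nat)^i)" by (simp only: of_nat_less_iff)
    then have X1: "X < 1" unfolding X_def by (simp add: divide_less_eq)
    have "\<lceil>real (7*8^(m-1) - 7*8^(l-1)) / real ((8::nat)^i)\<rceil> = int (7*8^(m-1-i))"
      unfolding e by (rule ceiling_unique) (use X0 X1 in auto)
    then have "nat \<lceil>real (7*8^(m-1) - 7*8^(l-1)) / real ((8::nat)^i)\<rceil> = 7*8^(m-1-i)"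
      by (simp only: nat_int)
    then show ?thesis using False by simp
  qed
qed

lemma griesmer_arith:
  fixes m l :: nat
  assumes l1: "1 \<le> l" and lm: "l < m"
  shows "(\<Sum>i<m. nat \<lceil>real (7*8^(m-1) - 7*8^(l-1)) / real ((8::nat)^i)\<rceil>) = 8^m - 8^l"
proof -
  have s0: "(\<Sum>i<m. nat \<lceil>real (7*8^(m-1) - 7*8^(l-1)) / real ((8::nat)^i)\<rceil>)
      = (\<Sum>i<m. 7*8^(m-1-i) - (if i < l then 7*8^(l-1-i) else 0))"
    by (rule sum.cong[OF refl], rule griesmer_term[OF l1 lm], simp)
  have le: "(if i < l then 7*8^(l-1-i) else (0::nat)) \<le> 7*8^(m-1-i)" for i
  proof (cases "i < l")
    case True
    have "(8::nat)^(l-1-i) \<le> 8^(m-1-i)" by (rule power_increasing) (use lm in auto)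
    then show ?thesis using True by simp
  qed simp
  have s1: "(\<Sum>i<m. 7*8^(m-1-i) - (if i < l then 7*8^(l-1-i) else 0))
     = (\<Sum>i<m. 7*8^(m-1-i)) - (\<Sum>i<m. (if i < l then 7*8^(l-1-i) else (0::nat)))"
    by (rule sum_subtractf_nat) (rule le)
  have s2: "(\<Sum>i<m. (if i < l then 7*8^(l-1-i) else (0::nat))) = (\<Sum>i\<in>{..<m} \<inter> {i. i < l}. 7*8^(l-1-i))"
    by (subst sum.inter_restrict) auto
  have s3: "{..<m} \<inter> {i. i < l} = {..<l}" using lm by auto
  have p1: "(8::nat)^l \<le> 8^m" using lm by (simp add: power_increasing)
  have p2: "(1::nat) \<le> 8^l" by simp
  have "(\<Sum>i<m. nat \<lceil>real (7*8^(m-1) - 7*8^(l-1)) / real ((8::nat)^i)\<rceil>)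
     = (\<Sum>i<m. 7*8^(m-1-i)) - (\<Sum>i<l. 7*8^(l-1-i))"
    using s0 s1 s2 s3 by (simp only:)
  also have "\<dots> = (8^m - 1) - (8^l - 1)" by (simp only: geo7)
  finally show ?thesis using p1 p2 by linarith
qed



lemma minimal_cw:
  fixes L :: "'n::finite set"
  assumes q: "CARD('a::{field,finite}) = 8" and ml: "card L + 2 \<le> CARD('n)"
  shows "minimal_code (range (cw L :: ('n \<Rightarrow> 'a) \<Rightarrow> _))"
  unfolding minimal_code_def
proof (intro ballI impI)
  fix c c' assume c: "c \<in> range (cw L :: ('n \<Rightarrow> 'a) \<Rightarrow> _)" and cnz: "c \<noteq> (\<lambda>i. 0)"
    and c': "c' \<in> range (cw L :: ('n \<Rightarrow> 'a) \<Rightarrow> _)"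
    and h: "c' \<noteq> (\<lambda>i. 0) \<and> {i. c' i \<noteq> 0} \<subseteq> {i. c i \<noteq> 0}"
  obtain v where v: "c = cw L v" using c by blast
  obtain u where u: "c' = cw L u" using c' by blast
  have "v \<noteq> (\<lambda>i. 0)" using cnz v cw_zero by metis
  then obtain i0 where i0: "v i0 \<noteq> 0" by auto
  show "\<exists>a. c' = (\<lambda>i. a * c i)"
  proof (cases "\<forall>x. dotp v x = 0 \<longrightarrow> dotp u x = 0")
    case True
    have "u = (\<lambda>j. (u i0 / v i0) * v j)"
    proof
      fix j
      define x :: "'n \<Rightarrow> 'a" where "x = (\<lambda>i. ev j i + (- v j / v i0) * ev i0 i)"
      have e1: "dotp v x = v j + (- v j / v i0) * v i0" by (simp only: x_def dotp_add dotp_smul dotp_ev)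
      have "dotp v x = 0" unfolding e1 using i0 by simp
      then have "dotp u x = 0" using True by blast
      moreover have "dotp u x = u j + (- v j / v i0) * u i0" by (simp only: x_def dotp_add dotp_smul dotp_ev)
      ultimately have "u j + (- v j / v i0) * u i0 = 0" by simp
      then show "u j = (u i0 / v i0) * v j" using i0 by (simp add: field_simps add_eq_0_iff)
    qed
    then have "cw L u = (\<lambda>d. (u i0 / v i0) * cw L v d)" by (metis cw_smul)
    then show ?thesis using u v by blast
  next
    case False
    then obtain x0 where x0: "dotp v x0 = 0" "dotp u x0 \<noteq> 0" by blast
    define V where "V = {x :: 'n \<Rightarrow> 'a. dotp v x = 0}"
    have c1: "card (UNIV :: ('n \<Rightarrow> 'a) set) = CARD('a) * card {x\<in>UNIV. dotp v x = 0}"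
      by (rule fiber_card[of UNIV "dotp v" "ev i0"]) (auto simp: dotp_add dotp_smul dotp_ev i0)
    have c2: "card V = CARD('a) * card {x\<in>V. dotp u x = 0}"
      by (rule fiber_card[of V "dotp u" x0]) (auto simp: V_def dotp_add dotp_smul x0)
    define K where "K = card {x\<in>V. dotp u x = 0}"
    have cU: "card (UNIV :: ('n \<Rightarrow> 'a) set) = 8 ^ CARD('n)" using q by (simp add: card_fun)
    have "{x\<in>UNIV. dotp v x = 0} = V" by (simp add: V_def)
    then have "8 ^ CARD('n) = 64 * K" using c1 c2 cU q unfolding K_def by simp
    moreover have "(8::nat) ^ CARD('n) = 64 * 8 ^ (CARD('n) - 2)"
    proof -
      have "CARD('n) = (CARD('n) - 2) + 2" using ml by simp
      then have "(8::nat) ^ CARD('n) = 8 ^ (CARD('n) - 2) * 8^2" by (metis power_add)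
      then show ?thesis by simp
    qed
    ultimately have K: "K = 8 ^ (CARD('n) - 2)" by simp
    have finV: "finite V" by simp
    have "{x\<in>V. dotp u x \<noteq> 0} = V - {x\<in>V. dotp u x = 0}" by auto
    then have "card {x\<in>V. dotp u x \<noteq> 0} = card V - K"
      unfolding K_def by (simp add: card_Diff_subset)
    also have "card V = 8 * K" using c2 q unfolding K_def by simp
    finally have cnz': "card {x\<in>V. dotp u x \<noteq> 0} = 7 * K" by simp
    have p: "(8::nat) ^ card L \<le> 8 ^ (CARD('n) - 2)" using ml by (simp add: power_increasing)
    have p0: "(0::nat) < 8 ^ card L" by simp
    have p7: "(8::nat) ^ card L < 7 * 8 ^ (CARD('n) - 2)" using p p0 by linarith
    have lt: "card (supL L :: ('n \<Rightarrow> 'a) set) < card {x\<in>V. dotp u x \<noteq> 0}"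
      using cnz' K card_supL[where L=L and 'a='a] q p7 by simp
    have "\<not> {x\<in>V. dotp u x \<noteq> 0} \<subseteq> supL L"
    proof
      assume "{x\<in>V. dotp u x \<noteq> 0} \<subseteq> supL L"
      then have "card {x\<in>V. dotp u x \<noteq> 0} \<le> card (supL L :: ('n \<Rightarrow> 'a) set)"
        by (rule card_mono[rotated]) simp
      then show False using lt by simp
    qed
    then obtain x where x: "dotp v x = 0" "dotp u x \<noteq> 0" "x \<notin> supL L" unfolding V_def by blast
    have "c' x \<noteq> 0" using x unfolding u cw_def by simp
    then have "c x \<noteq> 0" using h by blast
    moreover have "c x = 0" using x unfolding v cw_def by simp
    ultimately show ?thesis by blast
  qed
qed


theorem mainTheorem7:
  fixes \<omega> :: "'a::{field,finite}" and L :: "'n::finite set"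
  assumes q: "CARD('a) = 8"
    and root: "\<omega>^3 + \<omega> + 1 = 0"
    and L: "L \<noteq> {}" "L \<noteq> UNIV"
  defines "m \<equiv> CARD('n)"
    and "Dc \<equiv> UNIV - Dset \<omega> L"
    and "d \<equiv> 7 * 2^(3*(CARD('n)-1)) - 7 * 2^(3*(card L - 1))"
  shows "is_lin_code Dc (codeP Dc)
    \<and> card Dc = 2^(3*m) - 2^(3*card L)
    \<and> code_dim (codeP Dc) = m
    \<and> min_dist (codeP Dc) = d
    \<and> is_l_weight 2 (codeP Dc)
    \<and> hw ` codeP Dc = {0, d, 7 * 2^(3*(m-1))}
    \<and> griesmer (card Dc) m d TYPE('a)
    \<and> dist_optimal (card Dc) m d TYPE('a)
    \<and> (3 * (int m - int (card L)) - 4 \<ge> 0 \<longrightarrow> minimal_code (codeP Dc))"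
proof -
  have Deq: "Dset \<omega> L = supL L" by (rule Dset_eq[OF q root])
  have Dc: "Dc = UNIV - supL L" using Deq by (simp add: Dc_def)
  have code: "codeP Dc = range (cw L :: ('n \<Rightarrow> 'a) \<Rightarrow> _)" unfolding Dc by (rule codeP_cw)
  obtain i0 where i0: "i0 \<notin> L" using L(2) by auto
  obtain i1 where i1: "i1 \<in> L" using L(1) by auto
  define l where "l = card L"
  have l1: "1 \<le> l" unfolding l_def using i1 by (auto simp: Suc_le_eq card_gt_0_iff)
  have lm: "l < m" unfolding l_def m_def using i0
    by (intro psubset_card_mono) auto
  have dd: "d = 7*8^(m-1) - 7*8^(l-1)" unfolding d_def m_def l_def by (simp only: p8)
  define W :: nat where "W = 7 * 8^(m-1)"
  have W2: "7 * 2^(3*(m-1)) = W" unfolding W_def by (simp only: p8)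
  have pl: "(8::nat)^(l-1) < 8^(m-1)" using lm l1 by (simp add: power_strict_increasing)
  have dpos: "0 < d" unfolding dd using pl by simp
  have dW: "d < W" unfolding dd W_def using l1 by simp
  have hwc: "hw (cw L v) = (if v = (\<lambda>i. 0) then 0 else if \<exists>i\<in>L. v i \<noteq> 0 then d else W)"
    for v :: "'n \<Rightarrow> 'a"
    using hw_cw_cases[OF q, of L v] unfolding dd W_def m_def l_def by simp
  have cwnz: "cw L v \<noteq> (\<lambda>i. 0) \<longleftrightarrow> v \<noteq> (\<lambda>i. 0)" for v :: "'n \<Rightarrow> 'a"
    using cw_inj0[OF i0, of v] cw_zero[of L] by metis
  have ev1: "(ev i1 :: 'n \<Rightarrow> 'a) \<noteq> (\<lambda>i. 0)" "\<exists>i\<in>L. (ev i1 :: 'n \<Rightarrow> 'a) i \<noteq> 0"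
    using i1 by (auto simp: ev_def fun_eq_iff)
  have ev0: "(ev i0 :: 'n \<Rightarrow> 'a) \<noteq> (\<lambda>i. 0)" "\<not> (\<exists>i\<in>L. (ev i0 :: 'n \<Rightarrow> 'a) i \<noteq> 0)"
    using i0 by (auto simp: ev_def fun_eq_iff)
  have hd: "hw (cw L (ev i1 :: 'n \<Rightarrow> 'a)) = d" using hwc ev1 by simp
  have hW: "hw (cw L (ev i0 :: 'n \<Rightarrow> 'a)) = W" using hwc ev0 by simp
  have h0: "hw (cw L (\<lambda>i. 0 :: 'a)) = 0" using hwc by simp
  have himg: "hw ` codeP Dc = {0, d, W}"
  proof
    show "hw ` codeP Dc \<subseteq> {0, d, W}" unfolding code
    proof
      fix y assume "y \<in> hw ` range (cw L :: ('n \<Rightarrow> 'a) \<Rightarrow> _)"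
      then obtain v :: "'n \<Rightarrow> 'a" where y: "y = hw (cw L v)" by blast
      show "y \<in> {0, d, W}" unfolding y hwc[of v] by simp
    qed
    show "{0, d, W} \<subseteq> hw ` codeP Dc" unfolding code using hd hW h0 by (auto intro: image_eqI[OF sym])
  qed
  have nzw: "nz_weights (codeP Dc) = {d, W}"
  proof
    show "nz_weights (codeP Dc) \<subseteq> {d, W}"
    proof
      fix y assume "y \<in> nz_weights (codeP Dc)"
      then obtain v :: "'n \<Rightarrow> 'a" where y: "y = hw (cw L v)" and nz: "cw L v \<noteq> (\<lambda>i. 0)"
        unfolding nz_weights_def code by blast
      have "v \<noteq> (\<lambda>i. 0)" using nz cwnz by blast
      then show "y \<in> {d, W}" unfolding y hwc[of v] by simp
    qed
    show "{d, W} \<subseteq> nz_weights (codeP Dc)"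
      unfolding nz_weights_def code using hd hW ev1(1) ev0(1) cwnz by blast
  qed
  have P1: "is_lin_code Dc (codeP Dc)"
    unfolding is_lin_code_def code
  proof (intro conjI)
    show "finite Dc" by simp
    show "\<forall>c\<in>range (cw L). \<forall>i. i \<notin> Dc \<longrightarrow> c i = 0" unfolding Dc cw_def by auto
    show "(\<lambda>i. 0) \<in> range (cw L :: ('n \<Rightarrow> 'a) \<Rightarrow> _)" 
    proof -
      show ?thesis using rangeI[of "cw L" "\<lambda>i. 0 :: 'a"] by (simp add: cw_zero)
    qed
    show "\<forall>x\<in>range (cw L :: ('n \<Rightarrow> 'a) \<Rightarrow> _). \<forall>y\<in>range (cw L). (\<lambda>i. x i + y i) \<in> range (cw L)"
    proof (intro ballI)
      fix x y assume "x \<in> range (cw L :: ('n \<Rightarrow> 'a) \<Rightarrow> _)" "y \<in> range (cw L :: ('n \<Rightarrow> 'a) \<Rightarrow> _)"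
      then obtain u v where xy: "x = cw L u" "y = cw L v" by blast
      show "(\<lambda>i. x i + y i) \<in> range (cw L)"
        using rangeI[of "cw L" "\<lambda>i. u i + v i"] unfolding xy by (simp add: cw_add)
    qed
    show "\<forall>a. \<forall>x\<in>range (cw L :: ('n \<Rightarrow> 'a) \<Rightarrow> _). (\<lambda>i. a * x i) \<in> range (cw L)"
    proof (intro allI ballI)
      fix a x assume "x \<in> range (cw L :: ('n \<Rightarrow> 'a) \<Rightarrow> _)"
      then obtain u where xy: "x = cw L u" by blast
      show "(\<lambda>i. a * x i) \<in> range (cw L)"
        using rangeI[of "cw L" "\<lambda>i. a * u i"] unfolding xy by (simp add: cw_smul)
    qed
  qed
  have cardDc: "card Dc = 8^m - 8^l"
  proof -
    have "card Dc = card (UNIV :: ('n \<Rightarrow> 'a) set) - card (supL L :: ('n \<Rightarrow> 'a) set)"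
      unfolding Dc by (rule card_Diff_subset) auto
    then show ?thesis using q card_supL[where L=L and 'a='a] unfolding m_def l_def by (simp add: card_fun)
  qed
  have P2: "card Dc = 2^(3*m) - 2^(3*card L)" unfolding cardDc l_def by (simp only: p8)
  have P3: "code_dim (codeP Dc) = m" unfolding code m_def by (rule code_dim_cw[OF i0])
  have P4: "min_dist (codeP Dc) = d" unfolding min_dist_def nzw using dW by simp
  have P5: "is_l_weight 2 (codeP Dc)" unfolding is_l_weight_def nzw using dW by simp
  have P6: "hw ` codeP Dc = {0, d, 7 * 2^(3*(m-1))}" unfolding W2 by (rule himg)
  have P7: "griesmer (card Dc) m d TYPE('a)"
    unfolding griesmer_def q cardDc dd by (rule griesmer_arith[OF l1 lm])
  have P8: "dist_optimal (card Dc) m d TYPE('a)"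
    unfolding dist_optimal_def
  proof
    assume "\<exists>C :: (nat \<Rightarrow> 'a) set. is_lin_code {..<card Dc} C \<and> code_dim C = m \<and> min_dist C = d + 1"
    then obtain C :: "(nat \<Rightarrow> 'a) set" where C: "is_lin_code {..<card Dc} C" "code_dim C = m" "min_dist C = d + 1"
      by blast
    have em: "(8::nat)^m = 8 * 8^(m-1)" using lm by (metis Suc_diff_1 gr0I not_less0 power_Suc)
    have el: "(8::nat)^l = 8 * 8^(l-1)" using l1 by (metis Suc_diff_le diff_Suc_1 power_Suc)
    have h: "7 * card Dc = 8 * d" unfolding cardDc dd em el by (simp add: diff_mult_distrib2)
    have big: "d + 1 < 8^m"
    proof -
      have "(1::nat) \<le> 8^(l-1)" by simp
      then have "d + 1 \<le> 7 * 8^(m-1)" unfolding dd using pl by linarith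
      then show ?thesis using em by linarith
    qed
    show False by (rule plotkin[OF q C(1) C(2) C(3) h big])
  qed
  have P9: "3 * (int m - int (card L)) - 4 \<ge> 0 \<longrightarrow> minimal_code (codeP Dc)"
  proof
    assume "3 * (int m - int (card L)) - 4 \<ge> 0"
    then have "int (card L) + 2 \<le> int CARD('n)" unfolding m_def by presburger
    then have "card L + 2 \<le> CARD('n)" by linarith
    then show "minimal_code (codeP Dc)" unfolding code by (rule minimal_cw[OF q])
  qed
  show ?thesis using P1 P2 P3 P4 P5 P6 P7 P8 P9 by blast
qed

end
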